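(* Let $\ell$ be a positive integer and let $r_i=(a_i,b_i,c_i,d_i)\in\mathbb{Z}^4$, $i=1,2,3,4$, satisfy $r_i\cdot r_j=a_ia_j+b_ib_j+c_ic_j+d_id_j=\delta_{ij}\ell$ for all $i,j\in\{1,2,3,4\}$. Let $C_\ell=\{s_1r_1+s_2r_2+s_3r_3: s_1,s_2,s_3\in[0,1]\}$ be the three-dimensional cube spanned by the first three rows. Let $D_i=\gcd(a_i,b_i,c_i,d_i)$ for $i=1,\dots,4$, and for $1\le i<j\le 3$ let $\zeta_{ij}$ be the greatest common divisor of all $2\times 2$ minors of the matrix $\begin{pmatrix} a_i & b_i & c_i & d_i\\ a_j & b_j & c_j & d_j\end{pmatrix}$. Then for all positive integers $t$, $$\#(tC_\ell\cap\mathbb{Z}^4)=L(C_\ell,t)=\ell D_4 t^3+\Delta t^2+\Delta' t+1,$$ where $\Delta=\zeta_{12}+\zeta_{13}+\zeta_{23}$ and $\Delta'=D_1+D_2+D_3$.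
   Context: $\delta_{ij}$ is the Kronecker delta. *)

theory Defs
  imports "HOL-Analysis.Analysis" "HOL-Library.Numeral_Type"
begin

definition idot :: "int ^ 4 \<Rightarrow> int ^ 4 \<Rightarrow> int" where
  "idot u v = (\<Sum>k\<in>UNIV. u $ k * v $ k)"

definition vec_of_int4 :: "int ^ 4 \<Rightarrow> real ^ 4" where
  "vec_of_int4 u = (\<chi> k. real_of_int (u $ k))"

definition cube3 :: "(nat \<Rightarrow> int ^ 4) \<Rightarrow> (real ^ 4) set" where
  "cube3 r = {s1 *\<^sub>R vec_of_int4 (r 1) + s2 *\<^sub>R vec_of_int4 (r 2) + s3 *\<^sub>R vec_of_int4 (r 3)
              | s1 s2 s3. s1 \<in> {0..1} \<and> s2 \<in> {0..1} \<and> s3 \<in> {0..1}}"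

definition lattice_count :: "(real ^ 4) set \<Rightarrow> nat \<Rightarrow> nat" where
  "lattice_count C t = card {x :: int ^ 4. vec_of_int4 x \<in> ((\<lambda>y. real t *\<^sub>R y) ` C)}"

definition Dgcd :: "int ^ 4 \<Rightarrow> int" where
  "Dgcd u = Gcd (range (\<lambda>k. u $ k))"

definition zeta :: "int ^ 4 \<Rightarrow> int ^ 4 \<Rightarrow> int" where
  "zeta u v = Gcd {u $ k * v $ m - u $ m * v $ k | k m. k < m}"

end

theory Submission
  imports Defs "HOL-Library.Function_Algebras"
begin


definition ch :: "int \<Rightarrow> int \<Rightarrow> complex" where
  "ch l x = exp (2 * of_real pi * \<i> * of_int x / of_int l)"

lemma ch_add: "ch l (x + y) = ch l x * ch l y"
  unfolding ch_def by (simp add: exp_add[symmetric] add_divide_distrib distrib_left distrib_right)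

lemma ch_eq_1:
  assumes "l > 0" shows "ch l x = 1 \<longleftrightarrow> l dvd x"
proof
  assume "ch l x = 1"
  then obtain n :: int where n: "Im (2 * of_real pi * \<i> * of_int x / of_int l) = of_int (2*n) * pi"
    unfolding ch_def exp_eq_1 by blast
  have "Im (2 * of_real pi * \<i> * of_int x / of_int l) = 2 * pi * x / l"
    by (simp add: Im_divide_of_real[symmetric] del: Im_divide_of_real) 
  with n have "2 * pi * x / l = 2 * n * pi" by simp
  with assms pi_gt_zero have "real_of_int x = n * l" by (simp add: field_simps)
  hence "x = n * l" by (metis of_int_eq_iff of_int_mult)
  thus "l dvd x" by simp
next
  assume "l dvd x"
  then obtain n where "x = l * n" by blast
  hence "2 * of_real pi * \<i> * of_int x / of_int l = (2 * of_int n * pi) * \<i>"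
    using assms by (simp add: field_simps)
  thus "ch l x = 1" unfolding ch_def using exp_integer_2pi[of "of_int n"] by simp
qed

lemma ch_mult_pow: "ch l (int c * a) = ch l a ^ c"
proof (induction c)
  case (Suc c)
  have "ch l (int (Suc c) * a) = ch l (a + int c * a)" by (simp add: algebra_simps)
  then show ?case using Suc by (simp add: ch_add)
qed (simp add: ch_def)

lemma geo_ch:
  assumes "l > 0"
  shows "(\<Sum>c\<in>{0..<l}. ch l (c * a)) = (if l dvd a then of_int l else 0)"
proof -
  have "(\<Sum>c\<in>{0..<l}. ch l (c * a)) = (\<Sum>c<nat l. ch l (int c * a))"
    by (rule sum.reindex_bij_witness[of _ int nat]) (use assms in auto)
  also have "\<dots> = (\<Sum>c<nat l. ch l a ^ c)" by (simp add: ch_mult_pow)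
  finally have eq: "(\<Sum>c\<in>{0..<l}. ch l (c * a)) = (\<Sum>c<nat l. ch l a ^ c)" .
  show ?thesis
  proof (cases "l dvd a")
    case True
    then show ?thesis using eq assms ch_eq_1[OF assms, of a] by simp
  next
    case False
    hence ne: "ch l a \<noteq> 1" using ch_eq_1[OF assms] by simp
    have "ch l a ^ nat l = ch l (int (nat l) * a)" by (rule ch_mult_pow[symmetric])
    also have "\<dots> = 1" using assms ch_eq_1[OF assms, of "int (nat l) * a"] by simp
    finally show ?thesis using eq False geometric_sum[OF ne, of "nat l"] by simp
  qed
qed

definition ibox :: "int \<Rightarrow> ('k \<Rightarrow> int) set" where
  "ibox l = {f. \<forall>k. 0 \<le> f k \<and> f k < l}"

lemma box_PiE: "ibox l = PiE UNIV (\<lambda>_. {0..<l})"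
  unfolding ibox_def by (auto simp: PiE_def extensional_def)

lemma finite_box: "finite (ibox l :: ('k::finite \<Rightarrow> int) set)"
  unfolding box_PiE by (rule finite_PiE) auto

lemma ch_sum: "ch l (sum f A) = (\<Prod>x\<in>A. ch l (f x))"
proof (induction A rule: infinite_finite_induct)
  case (insert x F)
  then show ?case by (simp add: ch_add)
qed (simp_all add: ch_def)

lemma box_char_sum:
  fixes a :: "'k::finite \<Rightarrow> int"
  assumes "l > 0"
  shows "(\<Sum>z\<in>ibox l. ch l (\<Sum>k\<in>UNIV. z k * a k)) = (if \<forall>k. l dvd a k then of_int l ^ CARD('k) else 0)"
proof -
  have "(\<Sum>z\<in>ibox l. ch l (\<Sum>k\<in>UNIV. z k * a k)) = (\<Sum>z\<in>ibox l. \<Prod>k\<in>UNIV. ch l (z k * a k))"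
    by (simp add: ch_sum)
  also have "\<dots> = (\<Prod>k\<in>UNIV. \<Sum>c\<in>{0..<l}. ch l (c * a k))"
    unfolding box_PiE by (rule prod_sum_PiE[symmetric]) auto
  also have "\<dots> = (\<Prod>k\<in>UNIV. (if l dvd a k then of_int l else 0))"
    using geo_ch[OF assms] by simp
  also have "\<dots> = (if \<forall>k. l dvd a k then of_int l ^ CARD('k) else 0)"
  proof (cases "\<forall>k. l dvd a k")
    case True
    then show ?thesis by simp
  next
    case False
    then obtain k where "\<not> l dvd a k" by blast
    hence "(\<Prod>k\<in>UNIV. if l dvd a k then (of_int l :: complex) else 0) = 0"
      by (subst prod_zero_iff) auto
    then show ?thesis using False by simp
  qed
  finally show ?thesis .
qed

lemma dsum1: "(\<Sum>i\<in>UNIV. \<Sum>j\<in>UNIV. y i * z j * (A i j::int)) = (\<Sum>j\<in>UNIV. z j * (\<Sum>i\<in>UNIV. y i * A i j))"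
  unfolding sum_distrib_left by (rule trans[OF sum.swap]) (simp add: ac_simps)

lemma dsum2: "(\<Sum>i\<in>UNIV. \<Sum>j\<in>UNIV. y i * z j * (A i j::int)) = (\<Sum>i\<in>UNIV. y i * (\<Sum>j\<in>UNIV. z j * A i j))"
  unfolding sum_distrib_left by (simp add: ac_simps)

lemma sum_if_card: "finite B \<Longrightarrow> (\<Sum>y\<in>B. if P y then (c::complex) else 0) = of_nat (card {y\<in>B. P y}) * c"
  by (simp add: sum.inter_filter[symmetric])

lemma char_count:
  fixes A :: "'i::finite \<Rightarrow> 'j::finite \<Rightarrow> int"
  assumes "l > 0"
  shows "l ^ CARD('j) * card {y \<in> ibox l. \<forall>j. l dvd (\<Sum>i\<in>UNIV. y i * A i j)}
       = l ^ CARD('i) * card {z \<in> ibox l. \<forall>i. l dvd (\<Sum>j\<in>UNIV. z j * A i j)}"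
proof -
  let ?F = "\<lambda>y z. ch l (\<Sum>i\<in>UNIV. \<Sum>j\<in>UNIV. y i * z j * A i j)"
  have e1: "(\<Sum>y\<in>ibox l. \<Sum>z\<in>ibox l. ?F y z) = of_nat (card {y \<in> ibox l. \<forall>j. l dvd (\<Sum>i\<in>UNIV. y i * A i j)}) * of_int l ^ CARD('j)"
  proof -
    have "(\<Sum>y\<in>ibox l. \<Sum>z\<in>ibox l. ?F y z) = (\<Sum>y\<in>ibox l. \<Sum>z\<in>ibox l. ch l (\<Sum>j\<in>UNIV. z j * (\<Sum>i\<in>UNIV. y i * A i j)))"
      by (simp only: dsum1)
    also have "\<dots> = (\<Sum>y\<in>ibox l. if \<forall>j. l dvd (\<Sum>i\<in>UNIV. y i * A i j) then of_int l ^ CARD('j) else 0)"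
      by (rule sum.cong[OF refl], rule box_char_sum[OF assms])
    also have "\<dots> = of_nat (card {y \<in> ibox l. \<forall>j. l dvd (\<Sum>i\<in>UNIV. y i * A i j)}) * of_int l ^ CARD('j)"
      by (rule sum_if_card[OF finite_box])
    finally show ?thesis .
  qed
  have e2: "(\<Sum>y\<in>ibox l. \<Sum>z\<in>ibox l. ?F y z) = of_nat (card {z \<in> ibox l. \<forall>i. l dvd (\<Sum>j\<in>UNIV. z j * A i j)}) * of_int l ^ CARD('i)"
  proof -
    have "(\<Sum>y\<in>ibox l. \<Sum>z\<in>ibox l. ?F y z) = (\<Sum>z\<in>ibox l. \<Sum>y\<in>ibox l. ?F y z)"
      by (rule sum.swap)
    also have "\<dots> = (\<Sum>z\<in>ibox l. \<Sum>y\<in>ibox l. ch l (\<Sum>i\<in>UNIV. y i * (\<Sum>j\<in>UNIV. z j * A i j)))"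
      by (simp only: dsum2)
    also have "\<dots> = (\<Sum>z\<in>ibox l. if \<forall>i. l dvd (\<Sum>j\<in>UNIV. z j * A i j) then of_int l ^ CARD('i) else 0)"
      by (rule sum.cong[OF refl], rule box_char_sum[OF assms])
    also have "\<dots> = of_nat (card {z \<in> ibox l. \<forall>i. l dvd (\<Sum>j\<in>UNIV. z j * A i j)}) * of_int l ^ CARD('i)"
      by (rule sum_if_card[OF finite_box])
    finally show ?thesis .
  qed
  from e1 e2 have "(of_int (l ^ CARD('j) * card {y \<in> ibox l. \<forall>j. l dvd (\<Sum>i\<in>UNIV. y i * A i j)}) :: complex)
     = of_int (l ^ CARD('i) * card {z \<in> ibox l. \<forall>i. l dvd (\<Sum>j\<in>UNIV. z j * A i j)})"
    by (simp add: mult.commute)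
  thus ?thesis by (simp only: of_int_eq_iff)
qed


definition md :: "int \<Rightarrow> ('k \<Rightarrow> int) \<Rightarrow> ('k \<Rightarrow> int)" where
  "md l f = (\<lambda>k. f k mod l)"

lemma md_box: "l > 0 \<Longrightarrow> md l f \<in> ibox l"
  by (simp add: md_def ibox_def)

lemma md_id: "f \<in> ibox l \<Longrightarrow> md l f = f"
  by (simp add: md_def ibox_def fun_eq_iff)

lemma md_md_add: "md l (md l (y + h) - h) = md l y"
  by (simp add: md_def fun_eq_iff mod_diff_left_eq)

lemma md_md_sub: "md l (md l (y - h) + h) = md l y"
  by (simp add: md_def fun_eq_iff mod_add_left_eq)

lemma card_fibers_const:
  assumes "finite S" and "\<And>v. v \<in> \<phi> ` S \<Longrightarrow> card {y\<in>S. \<phi> y = v} = c"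
  shows "card S = card (\<phi> ` S) * c"
proof -
  have "S = (\<Union>v\<in>\<phi> ` S. {y\<in>S. \<phi> y = v})" by auto
  hence "card S = (\<Sum>v\<in>\<phi> ` S. card {y\<in>S. \<phi> y = v})"
  proof -
    have "card (\<Union>v\<in>\<phi> ` S. {y\<in>S. \<phi> y = v}) = (\<Sum>v\<in>\<phi> ` S. card {y\<in>S. \<phi> y = v})"
      by (rule card_UN_disjoint) (use assms(1) in auto)
    thus ?thesis using \<open>S = _\<close> by simp
  qed
  also have "\<dots> = (\<Sum>v\<in>\<phi> ` S. c)" using assms(2) by simp
  finally show ?thesis by simp
qed

lemma fiber_count:
  fixes S :: "('k::finite \<Rightarrow> int) set" and \<phi> :: "('k \<Rightarrow> int) \<Rightarrow> ('m \<Rightarrow> int)"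
  assumes l: "l > 0" and Sb: "S \<subseteq> ibox l"
    and Sadd: "\<And>y h. y \<in> S \<Longrightarrow> h \<in> S \<Longrightarrow> md l (y + h) \<in> S"
    and Ssub: "\<And>y h. y \<in> S \<Longrightarrow> h \<in> S \<Longrightarrow> md l (y - h) \<in> S"
    and padd: "\<And>y h. y \<in> S \<Longrightarrow> h \<in> S \<Longrightarrow> \<phi> (md l (y + h)) = md l (\<phi> y + \<phi> h)"
    and psub: "\<And>y h. y \<in> S \<Longrightarrow> h \<in> S \<Longrightarrow> \<phi> (md l (y - h)) = md l (\<phi> y - \<phi> h)"
    and pbox: "\<And>y. y \<in> S \<Longrightarrow> \<phi> y \<in> ibox l"
  shows "card S = card (\<phi> ` S) * card {y\<in>S. \<phi> y = 0}"
proof (rule card_fibers_const)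
  show "finite S" using Sb finite_box finite_subset by blast
  fix v assume "v \<in> \<phi> ` S"
  then obtain h where h: "h \<in> S" "\<phi> h = v" by blast
  have vb: "v \<in> ibox l" using h pbox by blast
  have hb: "h \<in> ibox l" using h Sb by blast
  have "bij_betw (\<lambda>y. md l (y + h)) {y\<in>S. \<phi> y = 0} {y\<in>S. \<phi> y = v}"
  proof (rule bij_betw_byWitness[where f'="\<lambda>y. md l (y - h)"])
    show "\<forall>a\<in>{y \<in> S. \<phi> y = 0}. md l (md l (a + h) - h) = a"
    proof
      fix a assume "a \<in> {y \<in> S. \<phi> y = 0}"
      hence "a \<in> ibox l" using Sb by auto
      thus "md l (md l (a + h) - h) = a" by (simp add: md_md_add md_id)
    qed
    show "\<forall>a'\<in>{y \<in> S. \<phi> y = v}. md l (md l (a' - h) + h) = a'"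
    proof
      fix a assume "a \<in> {y \<in> S. \<phi> y = v}"
      hence "a \<in> ibox l" using Sb by auto
      thus "md l (md l (a - h) + h) = a" by (simp add: md_md_sub md_id)
    qed
    show "(\<lambda>y. md l (y + h)) ` {y \<in> S. \<phi> y = 0} \<subseteq> {y \<in> S. \<phi> y = v}"
      using Sadd padd h vb md_id by auto
    show "(\<lambda>y. md l (y - h)) ` {y \<in> S. \<phi> y = v} \<subseteq> {y \<in> S. \<phi> y = 0}"
    proof
      fix x assume "x \<in> (\<lambda>y. md l (y - h)) ` {y \<in> S. \<phi> y = v}"
      then obtain y where y: "y \<in> S" "\<phi> y = v" "x = md l (y - h)" by blast
      have "\<phi> x = md l (v - v)" using psub[OF y(1) h(1)] y h by simp
      also have "\<dots> = 0" by (simp add: md_def fun_eq_iff)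
      finally show "x \<in> {y \<in> S. \<phi> y = 0}" using Ssub y h by auto
    qed
  qed
  thus "card {y\<in>S. \<phi> y = v} = card {y\<in>S. \<phi> y = 0}" by (simp add: bij_betw_same_card)
qed


lemma Dgcd_dvd: "Dgcd u dvd u $ k"
  unfolding Dgcd_def by (rule Gcd_dvd) auto

lemma dvd_Dgcd: "(\<And>k. d dvd u $ k) \<Longrightarrow> d dvd Dgcd u"
  unfolding Dgcd_def by (rule Gcd_greatest) auto

lemma Dgcd_nonneg: "0 \<le> Dgcd u"
  unfolding Dgcd_def by simp

lemma bezout_fin:
  fixes f :: "'a \<Rightarrow> int"
  assumes "finite I"
  shows "\<exists>w. (\<Sum>k\<in>I. w k * f k) = Gcd (f ` I)"
  using assms
proof (induction I rule: finite_induct)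
  case empty
  then show ?case by simp
next
  case (insert i I)
  then obtain w where w: "(\<Sum>k\<in>I. w k * f k) = Gcd (f ` I)" by blast
  obtain a b where ab: "a * f i + b * Gcd (f ` I) = gcd (f i) (Gcd (f ` I))"
    using bezout_int by blast
  define w' where "w' = (\<lambda>k. if k = i then a else b * w k)"
  have "(\<Sum>k\<in>insert i I. w' k * f k) = a * f i + (\<Sum>k\<in>I. b * w k * f k)"
    using insert by (simp add: w'_def) (intro sum.cong, auto)
  also have "(\<Sum>k\<in>I. b * w k * f k) = b * (\<Sum>k\<in>I. w k * f k)"
    by (simp add: sum_distrib_left mult.assoc)
  also have "\<dots> = b * Gcd (f ` I)" using w by simp
  finally show ?case using ab by auto
qed

lemma Dgcd_bezout: "\<exists>w::int^4. (\<Sum>k\<in>UNIV. w $ k * u $ k) = Dgcd u"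
proof -
  obtain w where "(\<Sum>k\<in>UNIV. w k * u $ k) = Gcd ((\<lambda>k. u $ k) ` UNIV)"
    using bezout_fin[of "UNIV :: 4 set" "\<lambda>k. u $ k"] by auto
  hence "(\<Sum>k\<in>UNIV. (\<chi> k. w k) $ k * u $ k) = Dgcd u" by (simp add: Dgcd_def)
  thus ?thesis by blast
qed

lemma dvd_vec_iff: "(\<forall>k. l dvd c * u $ k) \<longleftrightarrow> l dvd c * Dgcd u"
proof
  assume H: "\<forall>k. l dvd c * u $ k"
  obtain w :: "int^4" where w: "(\<Sum>k\<in>UNIV. w $ k * u $ k) = Dgcd u" using Dgcd_bezout by blast
  have "c * Dgcd u = (\<Sum>k\<in>UNIV. w $ k * (c * u $ k))"
    by (simp add: w[symmetric] sum_distrib_left ac_simps)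
  also have "l dvd \<dots>" using H by (intro dvd_sum) auto
  finally show "l dvd c * Dgcd u" .
next
  assume "l dvd c * Dgcd u"
  thus "\<forall>k. l dvd c * u $ k" using Dgcd_dvd by (meson dvd_trans mult_dvd_mono dvd_refl)
qed

lemma idot_self_Dgcd:
  assumes "idot u u = l" "l > 0"
  shows "Dgcd u > 0" "Dgcd u dvd l"
proof -
  have "Dgcd u * Dgcd u dvd idot u u"
    unfolding idot_def by (intro dvd_sum) (simp add: Dgcd_dvd mult_dvd_mono)
  hence dl: "Dgcd u dvd l" using assms by (metis dvd_mult_left)
  show "Dgcd u dvd l" by (rule dl)
  have "Dgcd u \<noteq> 0" using dl assms by auto
  thus "Dgcd u > 0" using Dgcd_nonneg[of u] by linarith
qed

lemma card_residue:
  fixes m l b0 :: int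
  assumes "m > 0" "m dvd l" "l > 0"
  shows "card {b \<in> {0..<l}. m dvd b - b0} = nat (l div m)"
proof -
  obtain q where q: "l = m * q" using assms by blast
  have qd: "l div m = q" using q assms by simp
  have "bij_betw (\<lambda>j. b0 mod m + m * j) {0..<q} {b \<in> {0..<l}. m dvd b - b0}"
  proof (rule bij_betw_byWitness[where f'="\<lambda>b. b div m"])
    show "\<forall>a\<in>{0..<q}. (b0 mod m + m * a) div m = a" using assms by simp
    show "\<forall>a'\<in>{b \<in> {0..<l}. m dvd b - b0}. b0 mod m + m * (a' div m) = a'"
    proof
      fix b assume "b \<in> {b \<in> {0..<l}. m dvd b - b0}"
      hence "b mod m = b0 mod m" by (simp add: mod_eq_dvd_iff)
      thus "b0 mod m + m * (b div m) = b" by (metis mult_div_mod_eq add.commute)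
    qed
    show "(\<lambda>j. b0 mod m + m * j) ` {0..<q} \<subseteq> {b \<in> {0..<l}. m dvd b - b0}"
    proof
      fix x assume "x \<in> (\<lambda>j. b0 mod m + m * j) ` {0..<q}"
      then obtain j where j: "j \<in> {0..<q}" "x = b0 mod m + m * j" by blast
      have r: "0 \<le> b0 mod m" "b0 mod m < m" using assms by auto
      have "m * j \<le> m * (q - 1)" using j assms by (intro mult_left_mono) auto
      hence "x < l" using j r q by (simp add: algebra_simps)
      moreover have "0 \<le> x" using j r assms by simp
      moreover have "m dvd x - b0"
      proof -
        have "x - b0 = m * j - m * (b0 div m)" using j by (simp add: minus_mod_eq_mult_div[symmetric] algebra_simps)
        thus ?thesis by simp
      qed
      ultimately show "x \<in> {b \<in> {0..<l}. m dvd b - b0}" by simp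
    qed
    show "(\<lambda>b. b div m) ` {b \<in> {0..<l}. m dvd b - b0} \<subseteq> {0..<q}"
    proof
      fix x assume "x \<in> (\<lambda>b. b div m) ` {b \<in> {0..<l}. m dvd b - b0}"
      then obtain b where b: "0 \<le> b" "b < l" "x = b div m" by auto
      have "b < q * m" using b q by (simp add: mult.commute)
      hence "b div m < q" using assms by (smt (verit) minus_div_mult_eq_mod mult_right_less_imp_less pos_mod_sign)
      moreover have "0 \<le> b div m" using b assms by (simp add: pos_imp_zdiv_nonneg_iff)
      ultimately show "x \<in> {0..<q}" using b by simp
    qed
  qed
  hence "card {b \<in> {0..<l}. m dvd b - b0} = card {0..<q}" by (metis bij_betw_same_card)
  thus ?thesis using qd by simp
qed


definition mnr :: "int^4 \<Rightarrow> int^4 \<Rightarrow> 4 \<Rightarrow> 4 \<Rightarrow> int" where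
  "mnr u v k m = u$k * v$m - u$m * v$k"

lemma zeta_alt: "zeta u v = Gcd {mnr u v k m | k m. k < m}"
  unfolding zeta_def mnr_def by simp

lemma zeta_dvd_mnr: "zeta u v dvd mnr u v k m"
proof (cases k m rule: linorder_cases)
  case less
  then show ?thesis unfolding zeta_alt by (intro Gcd_dvd) blast
next
  case equal
  then show ?thesis by (simp add: mnr_def)
next
  case greater
  have "zeta u v dvd mnr u v m k" unfolding zeta_alt using greater by (intro Gcd_dvd) blast
  moreover have "mnr u v k m = - mnr u v m k" by (simp add: mnr_def)
  ultimately show ?thesis by simp
qed

lemma dvd_zeta: "(\<And>k m. d dvd mnr u v k m) \<Longrightarrow> d dvd zeta u v"
  unfolding zeta_alt by (intro Gcd_greatest) blast

lemma zeta_nonneg: "0 \<le> zeta u v"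
  unfolding zeta_def by simp

lemma zeta_mult_dvd:
  assumes "\<And>k m. l dvd a * mnr u v k m"
  shows "l dvd a * zeta u v"
proof -
  have "l dvd Gcd ((*) a ` {mnr u v k m | k m. k < m})"
    using assms by (intro Gcd_greatest) blast
  hence "l dvd normalize (a * zeta u v)" by (simp add: Gcd_mult zeta_alt)
  thus ?thesis by simp
qed

lemma count1:
  fixes u :: "int^4"
  assumes l: "l > 0" and uu: "idot u u = l"
  shows "card {a \<in> {0..<l}. \<forall>k. l dvd a * u $ k} = nat (Dgcd u)"
proof -
  define D where "D = Dgcd u"
  have D: "D > 0" "D dvd l" using idot_self_Dgcd[OF uu l] by (auto simp: D_def)
  define m where "m = l div D"
  have lm: "l = m * D" using D by (simp add: m_def)
  have m0: "m > 0" using lm l D by (metis mult_pos_pos zero_less_mult_pos2 not_less_iff_gr_or_eq)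
  have "{a \<in> {0..<l}. \<forall>k. l dvd a * u $ k} = {a \<in> {0..<l}. m dvd a - 0}"
  proof -
    have "(\<forall>k. l dvd a * u $ k) \<longleftrightarrow> m dvd a - 0" for a
    proof -
      have "(\<forall>k. l dvd a * u $ k) \<longleftrightarrow> l dvd a * D" using dvd_vec_iff D_def by metis
      also have "\<dots> \<longleftrightarrow> m * D dvd a * D" using lm by simp
      also have "\<dots> \<longleftrightarrow> m dvd a" using D by simp
      finally show ?thesis by simp
    qed
    thus ?thesis by simp
  qed
  also have "card \<dots> = nat (l div m)" by (rule card_residue[OF m0 _ l]) (simp add: lm)
  also have "l div m = D" using lm m0 by simp
  finally show ?thesis by (simp add: D_def)
qed


lemma count2:
  fixes u v :: "int^4"
  assumes l: "l > 0" and uu: "idot u u = l" and vv: "idot v v = l" and uv: "idot u v = 0"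
  shows "card (SIGMA a:{0..<l}. {b \<in> {0..<l}. \<forall>k. l dvd a * u $ k + b * v $ k}) = nat (zeta u v)"
proof -
  define D where "D = Dgcd v"
  have D: "D > 0" "D dvd l" using idot_self_Dgcd[OF vv l] by (auto simp: D_def)
  define v' :: "int^4" where "v' = (\<chi> k. v $ k div D)"
  have vD: "v $ k = D * v' $ k" for k
    using Dgcd_dvd[of v k] by (simp add: v'_def D_def)
  obtain w :: "int^4" where w0: "(\<Sum>k\<in>UNIV. w $ k * v $ k) = D" using Dgcd_bezout D_def by blast
  have "D * (\<Sum>k\<in>UNIV. w $ k * v' $ k) = D"
    using w0 by (simp add: vD sum_distrib_left ac_simps)
  hence w: "(\<Sum>k\<in>UNIV. w $ k * v' $ k) = 1" using D by simp
  have vv': "D * D * idot v' v' = l"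
    using vv by (simp add: idot_def vD sum_distrib_left ac_simps)
  have "D * idot u v' = 0"
    using uv by (simp add: idot_def vD sum_distrib_left ac_simps)
  hence uv': "idot u v' = 0" using D by simp
  define c0 where "c0 = (\<Sum>k\<in>UNIV. u $ k * w $ k)"
  have eid: "u $ k - c0 * v' $ k = (\<Sum>m\<in>UNIV. w $ m * mnr u v' k m)" for k
  proof -
    have "(\<Sum>m\<in>UNIV. w $ m * mnr u v' k m) = u $ k * (\<Sum>m\<in>UNIV. w $ m * v' $ m) - v' $ k * (\<Sum>m\<in>UNIV. u $ m * w $ m)"
      by (simp add: mnr_def sum_distrib_left sum_subtractf algebra_simps)
    thus ?thesis using w by (simp add: c0_def)
  qed
  define E where "E = zeta u v'"
  have Edvd: "E dvd u $ k - c0 * v' $ k" for k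
    unfolding eid E_def by (intro dvd_sum dvd_mult zeta_dvd_mnr)
  have E0: "E \<noteq> 0"
  proof
    assume "E = 0"
    hence ue: "u $ k = c0 * v' $ k" for k using Edvd[of k] by simp
    have "0 = idot u v'" using uv' by simp
    also have "\<dots> = c0 * idot v' v'" by (simp add: idot_def ue sum_distrib_left ac_simps)
    finally have "c0 * idot v' v' = 0" by simp
    moreover have "idot v' v' \<noteq> 0" using vv' l by auto
    ultimately have "c0 = 0" by simp
    hence "idot u u = 0" by (simp add: idot_def ue)
    thus False using uu l by simp
  qed
  have Epos: "E > 0" using E0 zeta_nonneg[of u v'] by (simp add: E_def order_le_less)
  define f :: "int^4" where "f = (\<chi> k. (u $ k - c0 * v' $ k) div E)"
  have uf: "u $ k = E * f $ k + c0 * v' $ k" for k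
    using Edvd[of k] by (simp add: f_def)
  define g where "g = idot f u"
  have lEg: "l = E * g"
  proof -
    have "l = idot u u" using uu by simp
    also have "\<dots> = (\<Sum>k\<in>UNIV. (E * f $ k + c0 * v' $ k) * u $ k)"
      unfolding idot_def by (intro sum.cong refl) (metis uf)
    also have "\<dots> = E * idot f u + c0 * idot u v'"
      by (simp add: idot_def algebra_simps sum.distrib sum_distrib_left)
    finally show ?thesis using uv' by (simp add: g_def)
  qed
  have key: "g * c0 + D * D * idot f v' = 0"
  proof -
    have "0 = idot u v'" using uv' by simp
    also have "\<dots> = (\<Sum>k\<in>UNIV. (E * f $ k + c0 * v' $ k) * v' $ k)"
      unfolding idot_def by (intro sum.cong refl) (metis uf)
    also have "\<dots> = E * idot f v' + c0 * idot v' v'"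
      by (simp add: idot_def algebra_simps sum.distrib sum_distrib_left)
    finally have z: "g * D * D * (E * idot f v' + c0 * idot v' v') = 0" by simp
    have h1: "l * (D * D * idot f v') = g * D * D * (E * idot f v')"
      by (subst lEg) (simp add: algebra_simps)
    have h2: "l * (g * c0) = g * D * D * (c0 * idot v' v')"
      by (subst vv'[symmetric]) (simp add: algebra_simps)
    have "l * (D * D * idot f v' + g * c0) = l * (D * D * idot f v') + l * (g * c0)"
      by (simp only: distrib_left)
    also have "\<dots> = g * D * D * (E * idot f v') + g * D * D * (c0 * idot v' v')"
      by (simp only: h1 h2)
    also have "\<dots> = g * D * D * (E * idot f v' + c0 * idot v' v')"
      by (simp only: distrib_left)
    finally have "l * (D * D * idot f v' + g * c0) = 0" using z by simp
    hence "D * D * idot f v' + g * c0 = 0" using l by simp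
    thus ?thesis by (simp add: algebra_simps)
  qed
  have zD: "zeta u v = D * E"
  proof -
    have "{mnr u v k m | k m. k < m} = (*) D ` {mnr u v' k m | k m. k < m}"
    proof -
      have mD: "mnr u v k m = D * mnr u v' k m" for k m by (simp add: mnr_def vD algebra_simps)
      show ?thesis unfolding mD by blast
    qed
    hence "zeta u v = normalize (D * E)" by (simp add: zeta_alt Gcd_mult E_def)
    thus ?thesis using D Epos by simp
  qed
  define P where "P = (\<lambda>a b. \<forall>k. l dvd a * u $ k + b * v $ k)"
  have claimA: "(\<exists>b. P a b) \<longleftrightarrow> g dvd a" for a
  proof
    assume "\<exists>b. P a b"
    then obtain b where b: "P a b" by blast
    have "l dvd a * mnr u v' k m" for k m
    proof -
      have "a * mnr u v' k m = (a * u $ k + b * v $ k) * v' $ m - (a * u $ m + b * v $ m) * v' $ k"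
        by (simp add: mnr_def vD algebra_simps)
      also have "l dvd \<dots>" using b by (simp add: P_def)
      finally show ?thesis .
    qed
    hence "l dvd a * E" unfolding E_def by (rule zeta_mult_dvd)
    hence "g * E dvd a * E" using lEg by (simp add: mult.commute)
    thus "g dvd a" using E0 by simp
  next
    assume "g dvd a"
    then obtain n where n: "a = g * n" by blast
    define b where "b = n * D * idot f v'"
    have "a * u $ k + b * v $ k = l * (n * f $ k)" for k
    proof -
      have "a * u $ k + b * v $ k = n * (g * E) * f $ k + n * v' $ k * (g * c0 + D * D * idot f v')"
        by (simp add: n b_def uf vD algebra_simps)
      also have "\<dots> = l * (n * f $ k)" using key lEg by (simp add: algebra_simps)
      finally show ?thesis .
    qed
    hence "P a b" by (simp add: P_def)
    thus "\<exists>b. P a b" by blast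
  qed
  define m where "m = l div D"
  have lm: "l = m * D" using D by (simp add: m_def)
  have m0: "m > 0" using lm l D by (metis mult_pos_pos zero_less_mult_pos2 not_less_iff_gr_or_eq)
  have fib: "P a b \<longleftrightarrow> m dvd b - b0" if "P a b0" for a b b0
  proof -
    have "P a b \<longleftrightarrow> (\<forall>k. l dvd (b - b0) * v $ k)"
    proof -
      have "a * u $ k + b * v $ k = (a * u $ k + b0 * v $ k) + (b - b0) * v $ k" for k
        by (simp add: algebra_simps)
      thus ?thesis using that unfolding P_def by (metis dvd_add_right_iff)
    qed
    also have "\<dots> \<longleftrightarrow> l dvd (b - b0) * D" using dvd_vec_iff D_def by metis
    also have "\<dots> \<longleftrightarrow> m * D dvd (b - b0) * D" using lm by simp
    also have "\<dots> \<longleftrightarrow> m dvd b - b0" using D by simp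
    finally show ?thesis .
  qed
  have inner: "card {b \<in> {0..<l}. P a b} = (if g dvd a then nat D else 0)" for a
  proof (cases "g dvd a")
    case True
    then obtain b0 where b0: "P a b0" using claimA by blast
    have "{b \<in> {0..<l}. P a b} = {b \<in> {0..<l}. m dvd b - b0}" using fib[OF b0] by auto
    also have "card \<dots> = nat (l div m)" by (rule card_residue[OF m0 _ l]) (simp add: lm)
    also have "l div m = D" using lm m0 by simp
    finally show ?thesis using True by simp
  next
    case False
    hence "{b \<in> {0..<l}. P a b} = {}" using claimA by blast
    thus ?thesis using False by (simp only: card.empty if_False)
  qed
  have g0: "g > 0" using lEg l Epos by (metis zero_less_mult_pos)
  have "card (SIGMA a:{0..<l}. {b \<in> {0..<l}. \<forall>k. l dvd a * u $ k + b * v $ k})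
      = (\<Sum>a\<in>{0..<l}. card {b \<in> {0..<l}. P a b})" unfolding P_def
  proof (rule card_SigmaI[OF finite_atLeastLessThan_int], rule ballI)
    fix a show "finite {b \<in> {0..<l}. \<forall>k. l dvd a * u $ k + b * v $ k}"
      by (rule finite_subset[of _ "{0..<l}"]) auto
  qed
  also have "\<dots> = (\<Sum>a\<in>{0..<l}. if g dvd a then nat D else 0)" using inner by simp
  also have "\<dots> = card {a \<in> {0..<l}. g dvd a - 0} * nat D"
    by (simp add: sum.inter_filter[symmetric])
  also have "card {a \<in> {0..<l}. g dvd a - 0} = nat (l div g)"
    by (rule card_residue[OF g0 _ l]) (simp add: lEg)
  also have "l div g = E" using lEg g0 by simp
  finally show ?thesis using zD D Epos by (simp add: nat_mult_distrib mult.commute)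
qed


definition rho :: "(nat \<Rightarrow> int^4) \<Rightarrow> 4 \<Rightarrow> int^4" where
  "rho r i = r (if i = 1 then 1 else if i = 2 then 2 else if i = 3 then 3 else 4)"

lemma rho_simps: "rho r 1 = r 1" "rho r 2 = r 2" "rho r 3 = r 3" "rho r 4 = r 4"
  by (simp_all add: rho_def)

locale lat =
  fixes l :: int and r :: "nat \<Rightarrow> int^4"
  assumes l: "l > 0"
    and orth: "\<And>i j. i \<in> {1..4} \<Longrightarrow> j \<in> {1..4} \<Longrightarrow> idot (r i) (r j) = (if i = j then l else 0)"

context lat
begin

lemma rho_orth: "idot (rho r i) (rho r j) = (if i = j then l else 0)"
proof -
  have idx: "rho r i = r (if i = 1 then 1 else if i = 2 then 2 else if i = 3 then 3 else 4)" for i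
    by (simp add: rho_def)
  have inj: "(if i = 1 then 1 else if i = 2 then 2 else if i = 3 then 3 else 4::nat) =
             (if j = 1 then 1 else if j = 2 then 2 else if j = 3 then 3 else 4) \<longleftrightarrow> i = j" for i j :: 4
    using exhaust_4[of i] exhaust_4[of j] by auto
  show ?thesis unfolding idx by (subst orth) (auto simp: inj)
qed

lemma col_orth: "(\<Sum>i\<in>UNIV. rho r i $ k * rho r i $ m) = (if k = m then l else 0)"
proof -
  define M :: "real^4^4" where "M = (\<chi> i k. of_int (rho r i $ k))"
  have "M ** ((1 / of_int l) *\<^sub>R transpose M) = mat 1"
  proof -
    have "(M ** ((1 / of_int l) *\<^sub>R transpose M)) $ i $ j = mat 1 $ i $ j" for i j
    proof -
      have "(M ** ((1 / of_int l) *\<^sub>R transpose M)) $ i $ j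
          = (1 / of_int l) * of_int (idot (rho r i) (rho r j))"
        by (simp add: matrix_matrix_mult_def transpose_def M_def idot_def sum_distrib_left)
      also have "\<dots> = mat 1 $ i $ j" using l by (simp add: rho_orth mat_def)
      finally show ?thesis .
    qed
    thus ?thesis by (simp add: vec_eq_iff)
  qed
  hence "((1 / of_int l) *\<^sub>R transpose M) ** M = mat 1" by (simp add: matrix_left_right_inverse)
  hence "(((1 / of_int l) *\<^sub>R transpose M) ** M) $ k $ m = mat 1 $ k $ m" by simp
  hence "(1 / of_int l) * of_int (\<Sum>i\<in>UNIV. rho r i $ k * rho r i $ m) = (if k = m then 1 else 0 :: real)"
    by (simp add: matrix_matrix_mult_def transpose_def M_def sum_distrib_left mat_def)
  hence "(of_int (\<Sum>i\<in>UNIV. rho r i $ k * rho r i $ m) :: real) = of_int (if k = m then l else 0)"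
    using l by (auto simp: field_simps split: if_splits)
  thus ?thesis by (simp only: of_int_eq_iff)
qed

lemma expand: "(\<Sum>i\<in>UNIV. (\<Sum>m\<in>UNIV. x m * rho r i $ m) * rho r i $ k) = l * x k"
proof -
  have "(\<Sum>i\<in>UNIV. (\<Sum>m\<in>UNIV. x m * rho r i $ m) * rho r i $ k)
      = (\<Sum>i\<in>UNIV. \<Sum>m\<in>UNIV. x m * (rho r i $ m * rho r i $ k))"
    by (simp add: sum_distrib_right mult.assoc)
  also have "\<dots> = (\<Sum>m\<in>UNIV. \<Sum>i\<in>UNIV. x m * (rho r i $ m * rho r i $ k))"
    by (rule sum.swap)
  also have "\<dots> = (\<Sum>m\<in>UNIV. x m * (\<Sum>i\<in>UNIV. rho r i $ m * rho r i $ k))"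
    by (simp add: sum_distrib_left)
  also have "\<dots> = (\<Sum>m\<in>UNIV. x m * (if m = k then l else 0))" by (simp add: col_orth)
  also have "\<dots> = (\<Sum>m\<in>UNIV. if m = k then x m * l else 0)" by (intro sum.cong) auto
  also have "\<dots> = l * x k" by simp
  finally show ?thesis .
qed

lemma expand2: "(\<Sum>k\<in>UNIV. (\<Sum>i\<in>UNIV. y i * rho r i $ k) * rho r j $ k) = l * y j"
proof -
  have "(\<Sum>k\<in>UNIV. (\<Sum>i\<in>UNIV. y i * rho r i $ k) * rho r j $ k)
      = (\<Sum>k\<in>UNIV. \<Sum>i\<in>UNIV. y i * (rho r i $ k * rho r j $ k))"
    by (simp add: sum_distrib_right mult.assoc)
  also have "\<dots> = (\<Sum>i\<in>UNIV. \<Sum>k\<in>UNIV. y i * (rho r i $ k * rho r j $ k))"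
    by (rule sum.swap)
  also have "\<dots> = (\<Sum>i\<in>UNIV. y i * idot (rho r i) (rho r j))"
    by (simp add: sum_distrib_left idot_def)
  also have "\<dots> = (\<Sum>i\<in>UNIV. y i * (if i = j then l else 0))" by (simp add: rho_orth)
  also have "\<dots> = (\<Sum>i\<in>UNIV. if i = j then y i * l else 0)" by (intro sum.cong) auto
  also have "\<dots> = l * y j" by simp
  finally show ?thesis .
qed

end


lemma mod_sum_mult: "(\<Sum>i\<in>S. (y i mod l) * c i) mod l = (\<Sum>i\<in>S. y i * c i) mod (l::int)"
proof -
  have "(\<Sum>i\<in>S. (y i mod l) * c i) mod l = (\<Sum>i\<in>S. ((y i mod l) * c i) mod l) mod l"
    by (simp add: mod_sum_eq)
  also have "\<dots> = (\<Sum>i\<in>S. (y i * c i) mod l) mod l" by (simp add: mod_mult_left_eq)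
  also have "\<dots> = (\<Sum>i\<in>S. y i * c i) mod l" by (simp add: mod_sum_eq)
  finally show ?thesis .
qed

lemma card_ibox: "l > 0 \<Longrightarrow> card (ibox l :: (4 \<Rightarrow> int) set) = nat l ^ 4"
  unfolding box_PiE by (simp add: card_PiE)

context lat
begin

definition Hs :: "(4 \<Rightarrow> int) set" where
  "Hs = {y \<in> ibox l. \<forall>k. l dvd (\<Sum>i\<in>UNIV. y i * rho r i $ k)}"

definition Ks :: "(4 \<Rightarrow> int) set" where
  "Ks = {z \<in> ibox l. \<forall>i. l dvd (\<Sum>k\<in>UNIV. z k * rho r i $ k)}"

lemma card_H_K: "card Hs = card Ks"
proof -
  have "l ^ CARD(4) * int (card Hs) = l ^ CARD(4) * int (card Ks)"
    using char_count[OF l, of "\<lambda>i k. rho r i $ k"] by (simp add: Hs_def Ks_def)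
  thus ?thesis using l by simp
qed

definition Lm :: "(4 \<Rightarrow> int) \<Rightarrow> (4 \<Rightarrow> int)" where
  "Lm y = md l (\<lambda>k. \<Sum>i\<in>UNIV. y i * rho r i $ k)"

lemma Lm_md: "Lm (md l y) = Lm y"
  unfolding Lm_def md_def by (simp add: mod_sum_mult fun_eq_iff)

lemma card_H_K_prod: "nat l ^ 4 = card Ks * card Hs"
proof -
  have fc: "card (ibox l :: (4\<Rightarrow>int) set) = card (Lm ` ibox l) * card {y \<in> ibox l. Lm y = 0}"
  proof (rule fiber_count[OF l])
    fix y h :: "4 \<Rightarrow> int"
    show "md l (y + h) \<in> ibox l" "md l (y - h) \<in> ibox l" using md_box[OF l] by auto
    show "Lm (md l (y + h)) = md l (Lm y + Lm h)"
      unfolding Lm_md by (simp add: Lm_def md_def fun_eq_iff mod_add_eq sum.distrib distrib_right)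
    show "Lm (md l (y - h)) = md l (Lm y - Lm h)"
      unfolding Lm_md by (simp add: Lm_def md_def fun_eq_iff mod_diff_eq sum_subtractf left_diff_distrib)
    show "Lm y \<in> ibox l" unfolding Lm_def by (rule md_box[OF l])
  qed simp
  have z: "{y \<in> ibox l. Lm y = 0} = Hs"
    unfolding Hs_def Lm_def md_def by (auto simp: fun_eq_iff dvd_eq_mod_eq_0)
  have im: "Lm ` ibox l = Ks"
  proof
    show "Lm ` ibox l \<subseteq> Ks"
    proof
      fix z assume "z \<in> Lm ` ibox l"
      then obtain y where y: "z = Lm y" by blast
      have "l dvd (\<Sum>k\<in>UNIV. z k * rho r j $ k)" for j
      proof -
        have "(\<Sum>k\<in>UNIV. z k * rho r j $ k) mod l
            = (\<Sum>k\<in>UNIV. (\<Sum>i\<in>UNIV. y i * rho r i $ k) * rho r j $ k) mod l"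
          unfolding y Lm_def md_def by (rule mod_sum_mult)
        also have "\<dots> = 0" by (simp add: expand2)
        finally show ?thesis by (simp add: dvd_eq_mod_eq_0)
      qed
      moreover have "z \<in> ibox l" unfolding y Lm_def by (rule md_box[OF l])
      ultimately show "z \<in> Ks" by (simp add: Ks_def)
    qed
    show "Ks \<subseteq> Lm ` ibox l"
    proof
      fix z assume z: "z \<in> Ks"
      define y where "y = (\<lambda>i. (\<Sum>m\<in>UNIV. z m * rho r i $ m) div l)"
      have yi: "l * y i = (\<Sum>m\<in>UNIV. z m * rho r i $ m)" for i
        using z unfolding Ks_def y_def by auto
      have "l * (\<Sum>i\<in>UNIV. y i * rho r i $ k) = l * z k" for k
      proof -
        have "l * (\<Sum>i\<in>UNIV. y i * rho r i $ k) = (\<Sum>i\<in>UNIV. (l * y i) * rho r i $ k)"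
          by (simp add: sum_distrib_left mult.assoc)
        also have "\<dots> = l * z k" unfolding yi by (rule expand)
        finally show ?thesis .
      qed
      hence e: "(\<Sum>i\<in>UNIV. y i * rho r i $ k) = z k" for k using l by simp
      have "Lm (md l y) = z"
        unfolding Lm_md unfolding Lm_def e using z md_id by (simp add: Ks_def md_def fun_eq_iff ibox_def)
      moreover have "md l y \<in> ibox l" by (rule md_box[OF l])
      ultimately show "z \<in> Lm ` ibox l" by blast
    qed
  qed
  show ?thesis using fc z im card_ibox[OF l] by simp
qed

lemma card_H: "card Hs = nat l ^ 2"
proof -
  have a: "card Hs * card Hs = nat l ^ 4" using card_H_K_prod card_H_K by simp
  have b: "nat l ^ 4 = (nat l ^ 2) * (nat l ^ 2)" by (simp add: power_add[symmetric])
  have "card Hs ^ 2 = (nat l ^ 2) ^ 2" using a b by (simp add: power2_eq_square)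
  thus ?thesis by (rule power_eq_imp_eq_base) auto
qed

end


context lat
begin

definition P4 :: "(4 \<Rightarrow> int) \<Rightarrow> (4 \<Rightarrow> int)" where
  "P4 y = (\<lambda>k. if k = 4 then y 4 else 0)"

lemma Hs_mod: "y \<in> ibox l \<Longrightarrow> y \<in> Hs \<longleftrightarrow> (\<forall>k. (\<Sum>i\<in>UNIV. y i * rho r i $ k) mod l = 0)"
  unfolding Hs_def by (simp add: dvd_eq_mod_eq_0)

lemma card_H0: "card {y \<in> Hs. y 4 = 0} = nat (l * Dgcd (r 4))"
proof -
  define D where "D = Dgcd (r 4)"
  have r44: "idot (r 4) (r 4) = l" using orth[of 4 4] by simp
  have D: "D > 0" "D dvd l" using idot_self_Dgcd[OF r44 l] by (auto simp: D_def)
  have Hb: "Hs \<subseteq> ibox l" unfolding Hs_def by auto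
  have fc: "card Hs = card (P4 ` Hs) * card {y \<in> Hs. P4 y = 0}"
  proof (rule fiber_count[OF l Hb])
    fix y h :: "4 \<Rightarrow> int" assume y: "y \<in> Hs" and h: "h \<in> Hs"
    have yd: "l dvd (\<Sum>i\<in>UNIV. y i * rho r i $ k)" for k using y by (simp add: Hs_def)
    have hd: "l dvd (\<Sum>i\<in>UNIV. h i * rho r i $ k)" for k using h by (simp add: Hs_def)
    have "(\<Sum>i\<in>UNIV. md l (y + h) i * rho r i $ k) mod l = 0" for k
    proof -
      have "(\<Sum>i\<in>UNIV. md l (y + h) i * rho r i $ k) mod l = (\<Sum>i\<in>UNIV. (y i + h i) * rho r i $ k) mod l"
        unfolding md_def by (simp add: mod_sum_mult)
      also have "(\<Sum>i\<in>UNIV. (y i + h i) * rho r i $ k) = (\<Sum>i\<in>UNIV. y i * rho r i $ k) + (\<Sum>i\<in>UNIV. h i * rho r i $ k)"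
        by (simp add: sum.distrib distrib_right)
      finally show ?thesis using yd[of k] hd[of k] by (simp add: plus_fun_def)
    qed
    thus "md l (y + h) \<in> Hs" using Hs_mod md_box[OF l] by blast
    have "(\<Sum>i\<in>UNIV. md l (y - h) i * rho r i $ k) mod l = 0" for k
    proof -
      have "(\<Sum>i\<in>UNIV. md l (y - h) i * rho r i $ k) mod l = (\<Sum>i\<in>UNIV. (y i - h i) * rho r i $ k) mod l"
        unfolding md_def by (simp add: mod_sum_mult)
      also have "(\<Sum>i\<in>UNIV. (y i - h i) * rho r i $ k) = (\<Sum>i\<in>UNIV. y i * rho r i $ k) - (\<Sum>i\<in>UNIV. h i * rho r i $ k)"
        by (simp add: sum_subtractf left_diff_distrib)
      finally show ?thesis using yd[of k] hd[of k] by (simp add: fun_diff_def)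
    qed
    thus "md l (y - h) \<in> Hs" using Hs_mod md_box[OF l] by blast
    show "P4 (md l (y + h)) = md l (P4 y + P4 h)"
      by (simp add: P4_def md_def fun_eq_iff)
    show "P4 (md l (y - h)) = md l (P4 y - P4 h)"
      by (simp add: P4_def md_def fun_eq_iff)
  next
    fix y assume "y \<in> Hs"
    hence "y \<in> ibox l" using Hb by auto
    thus "P4 y \<in> ibox l" using l by (simp add: P4_def ibox_def)
  qed
  have z: "{y \<in> Hs. P4 y = 0} = {y \<in> Hs. y 4 = 0}"
    by (auto simp: P4_def fun_eq_iff)
  define emb where "emb = (\<lambda>v::int. \<lambda>k::4. if k = 4 then v else 0)"
  have im: "P4 ` Hs = emb ` {v \<in> {0..<l}. D dvd v - 0}"
  proof
    show "P4 ` Hs \<subseteq> emb ` {v \<in> {0..<l}. D dvd v - 0}"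
    proof
      fix p assume "p \<in> P4 ` Hs"
      then obtain y where y: "y \<in> Hs" "p = P4 y" by blast
      have yb: "0 \<le> y 4" "y 4 < l" using y Hb by (auto simp: ibox_def)
      define u where "u = (\<lambda>k. (\<Sum>i\<in>UNIV. y i * rho r i $ k) div l)"
      have uk: "l * u k = (\<Sum>i\<in>UNIV. y i * rho r i $ k)" for k
        using y unfolding Hs_def u_def by auto
      have "l * (\<Sum>k\<in>UNIV. u k * rho r 4 $ k) = (\<Sum>k\<in>UNIV. (l * u k) * rho r 4 $ k)"
        by (simp add: sum_distrib_left mult.assoc)
      also have "\<dots> = l * y 4" unfolding uk by (rule expand2)
      finally have "(\<Sum>k\<in>UNIV. u k * rho r 4 $ k) = y 4" using l by simp
      moreover have "D dvd (\<Sum>k\<in>UNIV. u k * rho r 4 $ k)"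
        unfolding D_def rho_simps by (intro dvd_sum dvd_mult Dgcd_dvd)
      ultimately have "D dvd y 4" by simp
      hence "y 4 \<in> {v \<in> {0..<l}. D dvd v - 0}" using yb by simp
      moreover have "p = emb (y 4)" using y by (simp add: emb_def P4_def)
      ultimately show "p \<in> emb ` {v \<in> {0..<l}. D dvd v - 0}" by blast
    qed
    show "emb ` {v \<in> {0..<l}. D dvd v - 0} \<subseteq> P4 ` Hs"
    proof
      fix p assume "p \<in> emb ` {v \<in> {0..<l}. D dvd v - 0}"
      then obtain v where v: "0 \<le> v" "v < l" "D dvd v" "p = emb v" by auto
      obtain n where n: "v = D * n" using v by blast
      obtain w :: "int^4" where w: "(\<Sum>k\<in>UNIV. w $ k * r 4 $ k) = D" using Dgcd_bezout D_def by blast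
      define x where "x = (\<lambda>k. n * w $ k)"
      define y where "y = md l (\<lambda>i. \<Sum>m\<in>UNIV. x m * rho r i $ m)"
      have yb: "y \<in> ibox l" unfolding y_def by (rule md_box[OF l])
      have "(\<Sum>i\<in>UNIV. y i * rho r i $ k) mod l = 0" for k
      proof -
        have "(\<Sum>i\<in>UNIV. y i * rho r i $ k) mod l = (\<Sum>i\<in>UNIV. (\<Sum>m\<in>UNIV. x m * rho r i $ m) * rho r i $ k) mod l"
          unfolding y_def md_def by (rule mod_sum_mult)
        also have "\<dots> = (l * x k) mod l" by (simp only: expand)
        finally show ?thesis by simp
      qed
      hence yH: "y \<in> Hs" using Hs_mod yb by blast
      have "y 4 = (\<Sum>m\<in>UNIV. x m * r 4 $ m) mod l" by (simp add: y_def md_def rho_simps)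
      also have "(\<Sum>m\<in>UNIV. x m * r 4 $ m) = n * D"
        using w by (simp add: x_def sum_distrib_left[symmetric] mult.assoc)
      also have "n * D mod l = v" using n v by (simp add: mult.commute)
      finally have y4: "y 4 = v" using v by simp
      have "P4 y = p" unfolding P4_def v(4) emb_def fun_eq_iff using y4 by simp
      thus "p \<in> P4 ` Hs" using yH by blast
    qed
  qed
  have "inj_on emb {v \<in> {0..<l}. D dvd v - 0}"
  proof (rule inj_onI)
    fix a b assume "emb a = emb b"
    hence "emb a 4 = emb b 4" by simp
    thus "a = b" by (simp add: emb_def)
  qed
  hence "card (P4 ` Hs) = card {v \<in> {0..<l}. D dvd v - 0}" unfolding im by (rule card_image)
  also have "\<dots> = nat (l div D)" by (rule card_residue[OF D(1) D(2) l])
  finally have cP: "card (P4 ` Hs) = nat (l div D)" .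
  define c where "c = card {y \<in> Hs. y 4 = 0}"
  have "nat l ^ 2 = nat (l div D) * c" using fc z cP card_H by (simp add: c_def)
  hence "int (nat l ^ 2) = int (nat (l div D)) * int c" by simp
  moreover have "int (nat (l div D)) = l div D" using D l by (simp add: pos_imp_zdiv_nonneg_iff)
  moreover have "int (nat l ^ 2) = l * l" using l by (simp add: power2_eq_square)
  ultimately have e1: "l * l = (l div D) * int c" by simp
  have lD: "l = (l div D) * D" using D by simp
  have "(l div D) * (l * D) = l * l" by (subst (2) lD) (simp add: ac_simps)
  hence "(l div D) * (l * D) = (l div D) * int c" using e1 by simp
  moreover have "l div D \<noteq> 0" using lD l by (metis less_irrefl mult_zero_left)
  ultimately have "int c = l * D" by simp
  thus ?thesis by (simp add: D_def c_def)
qed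

end


lemma per_iter: "(\<And>a. g (a + l) = g a) \<Longrightarrow> g (a + int t * l) = (g a :: int)"
proof (induction t)
  case (Suc t)
  have "g (a + int (Suc t) * l) = g ((a + int t * l) + l)" by (simp add: algebra_simps)
  also have "\<dots> = g (a + int t * l)" by (rule Suc.prems)
  finally show ?case using Suc by simp
qed simp

lemma per_sum_lt:
  assumes per: "\<And>a. g (a + l) = g a" and l: "l > 0"
  shows "(\<Sum>a\<in>{0..<int t * l}. g a) = int t * (\<Sum>a\<in>{0..<l}. g a)"
proof (induction t)
  case 0
  then show ?case by simp
next
  case (Suc t)
  have split: "{0..<int (Suc t) * l} = {0..<int t * l} \<union> {int t * l..<int t * l + l}"
  proof -
    have "0 \<le> l * int t" using l by simp
    show ?thesis using l by (auto simp: algebra_simps; smt (verit) \<open>0 \<le> l * int t\<close>)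
  qed
  have "(\<Sum>a\<in>{0..<int (Suc t) * l}. g a) = (\<Sum>a\<in>{0..<int t * l}. g a) + (\<Sum>a\<in>{int t * l..<int t * l + l}. g a)"
    unfolding split by (rule sum.union_disjoint) auto
  also have "(\<Sum>a\<in>{int t * l..<int t * l + l}. g a) = (\<Sum>a\<in>{0..<l}. g (a + int t * l))"
    by (rule sum.reindex_bij_witness[of _ "\<lambda>a. a + int t * l" "\<lambda>a. a - int t * l"]) auto
  also have "\<dots> = (\<Sum>a\<in>{0..<l}. g a)" using per_iter[of g l] per by simp
  finally show ?case using Suc by (simp add: algebra_simps)
qed

lemma per_sum:
  assumes per: "\<And>a. g (a + l) = g a" and l: "l > 0"
  shows "(\<Sum>a\<in>{0..int t * l}. g a) = g 0 + int t * (\<Sum>a\<in>{0..<l}. g a)"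
proof -
  have "{0..int t * l} = insert (int t * l) {0..<int t * l}" using l by auto
  hence "(\<Sum>a\<in>{0..int t * l}. g a) = g (int t * l) + (\<Sum>a\<in>{0..<int t * l}. g a)" by simp
  moreover have "g (int t * l) = g 0" using per_iter[of g l 0 t] per by simp
  ultimately show ?thesis using per_sum_lt[of g l t, OF per l] by simp
qed

context lat
begin

definition Pt :: "int \<Rightarrow> int \<Rightarrow> int \<Rightarrow> bool" where
  "Pt a b c = (\<forall>k. l dvd a * r 1 $ k + b * r 2 $ k + c * r 3 $ k)"

definition ft :: "int \<Rightarrow> int \<Rightarrow> int \<Rightarrow> int" where
  "ft a b c = (if Pt a b c then 1 else 0)"

lemma dvdP: "l dvd X + l * Y \<longleftrightarrow> l dvd (X::int)"
  by (metis dvd_add_left_iff dvd_triv_left)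

lemma ft_per: "ft (a + l) b c = ft a b c" "ft a (b + l) c = ft a b c" "ft a b (c + l) = ft a b c"
proof -
  have e1: "(a + l) * r 1 $ k + b * r 2 $ k + c * r 3 $ k = (a * r 1 $ k + b * r 2 $ k + c * r 3 $ k) + l * r 1 $ k" for k
    by (simp add: algebra_simps)
  have e2: "a * r 1 $ k + (b + l) * r 2 $ k + c * r 3 $ k = (a * r 1 $ k + b * r 2 $ k + c * r 3 $ k) + l * r 2 $ k" for k
    by (simp add: algebra_simps)
  have e3: "a * r 1 $ k + b * r 2 $ k + (c + l) * r 3 $ k = (a * r 1 $ k + b * r 2 $ k + c * r 3 $ k) + l * r 3 $ k" for k
    by (simp add: algebra_simps)
  show "ft (a + l) b c = ft a b c" unfolding ft_def Pt_def by (simp only: e1 dvdP)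
  show "ft a (b + l) c = ft a b c" unfolding ft_def Pt_def by (simp only: e2 dvdP)
  show "ft a b (c + l) = ft a b c" unfolding ft_def Pt_def by (simp only: e3 dvdP)
qed

end


lemma distinct4: "(1::4) \<noteq> 2" "(1::4) \<noteq> 3" "(1::4) \<noteq> 4" "(2::4) \<noteq> 3" "(2::4) \<noteq> 4" "(3::4) \<noteq> 4"
  by simp_all

lemma sum_ind: "finite A \<Longrightarrow> (\<Sum>a\<in>A. if P a then 1 else 0::int) = int (card {a\<in>A. P a})"
  by (simp add: sum.inter_filter[symmetric])

context lat
begin

lemma total_expand:
  "(\<Sum>a\<in>{0..int t*l}. \<Sum>b\<in>{0..int t*l}. \<Sum>c\<in>{0..int t*l}. ft a b c) =
     ft 0 0 0
   + int t * ((\<Sum>a\<in>{0..<l}. ft a 0 0) + (\<Sum>b\<in>{0..<l}. ft 0 b 0) + (\<Sum>c\<in>{0..<l}. ft 0 0 c))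
   + int t ^ 2 * ((\<Sum>a\<in>{0..<l}. \<Sum>b\<in>{0..<l}. ft a b 0) + (\<Sum>a\<in>{0..<l}. \<Sum>c\<in>{0..<l}. ft a 0 c)
                  + (\<Sum>b\<in>{0..<l}. \<Sum>c\<in>{0..<l}. ft 0 b c))
   + int t ^ 3 * (\<Sum>a\<in>{0..<l}. \<Sum>b\<in>{0..<l}. \<Sum>c\<in>{0..<l}. ft a b c)" (is "_ = ?R")
proof -
  define G where "G = (\<lambda>a b. ft a b 0 + int t * (\<Sum>c\<in>{0..<l}. ft a b c))"
  define K where "K = (\<lambda>a. G a 0 + int t * (\<Sum>b\<in>{0..<l}. G a b))"
  have inner: "(\<Sum>c\<in>{0..int t*l}. ft a b c) = G a b" for a b
    unfolding G_def by (rule per_sum[OF _ l]) (rule ft_per(3))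
  have mid: "(\<Sum>b\<in>{0..int t*l}. G a b) = K a" for a
    unfolding K_def by (rule per_sum[OF _ l]) (simp add: G_def ft_per)
  have outer: "(\<Sum>a\<in>{0..int t*l}. K a) = K 0 + int t * (\<Sum>a\<in>{0..<l}. K a)"
    by (rule per_sum[OF _ l]) (simp add: K_def G_def ft_per)
  have "(\<Sum>a\<in>{0..int t*l}. \<Sum>b\<in>{0..int t*l}. \<Sum>c\<in>{0..int t*l}. ft a b c) = K 0 + int t * (\<Sum>a\<in>{0..<l}. K a)"
    by (simp add: inner mid outer)
  also have "\<dots> = ?R"
    by (simp add: K_def G_def sum.distrib sum_distrib_left algebra_simps power2_eq_square power3_eq_cube)
  finally show ?thesis .
qed

end


lemma sum2_card: "(\<Sum>a\<in>{0..<l}. \<Sum>b\<in>{0..<l}. if Q a b then 1 else 0::int)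
   = int (card (SIGMA a:{0..<l::int}. {b\<in>{0..<l}. Q a b}))"
proof -
  have "(\<Sum>a\<in>{0..<l}. \<Sum>b\<in>{0..<l}. if Q a b then 1 else 0::int) = (\<Sum>a\<in>{0..<l}. int (card {b\<in>{0..<l}. Q a b}))"
    by (simp add: sum_ind)
  also have "\<dots> = int (\<Sum>a\<in>{0..<l}. card {b\<in>{0..<l}. Q a b})" by simp
  also have "(\<Sum>a\<in>{0..<l}. card {b\<in>{0..<l}. Q a b}) = card (SIGMA a:{0..<l::int}. {b\<in>{0..<l}. Q a b})"
  proof (rule card_SigmaI[symmetric])
    show "\<forall>a\<in>{0..<l}. finite {b\<in>{0..<l}. Q a b}"
    proof
      fix a show "finite {b\<in>{0..<l}. Q a b}" by (rule finite_subset[of _ "{0..<l}"]) auto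
    qed
  qed simp
  finally show ?thesis .
qed

context lat
begin

lemma orth': "idot (r i) (r i) = l" "idot (r i) (r j) = 0" if "i \<in> {1..4}" "j \<in> {1..4}" "i \<noteq> j"
  using orth[of i i] orth[of i j] that by auto

lemma S1: "(\<Sum>a\<in>{0..<l}. ft a 0 0) = Dgcd (r 1)"
          "(\<Sum>b\<in>{0..<l}. ft 0 b 0) = Dgcd (r 2)"
          "(\<Sum>c\<in>{0..<l}. ft 0 0 c) = Dgcd (r 3)"
proof -
  have c: "int (card {a \<in> {0..<l}. \<forall>k. l dvd a * r i $ k}) = Dgcd (r i)" if "i \<in> {1..4}" for i
    using count1[OF l, of "r i"] orth[of i i] that Dgcd_nonneg[of "r i"] by simp
  show "(\<Sum>a\<in>{0..<l}. ft a 0 0) = Dgcd (r 1)"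
    using c[of 1] by (simp add: ft_def Pt_def sum_ind)
  show "(\<Sum>b\<in>{0..<l}. ft 0 b 0) = Dgcd (r 2)"
    using c[of 2] by (simp add: ft_def Pt_def sum_ind)
  show "(\<Sum>c\<in>{0..<l}. ft 0 0 c) = Dgcd (r 3)"
    using c[of 3] by (simp add: ft_def Pt_def sum_ind)
qed

lemma S2: "(\<Sum>a\<in>{0..<l}. \<Sum>b\<in>{0..<l}. ft a b 0) = zeta (r 1) (r 2)"
          "(\<Sum>a\<in>{0..<l}. \<Sum>c\<in>{0..<l}. ft a 0 c) = zeta (r 1) (r 3)"
          "(\<Sum>b\<in>{0..<l}. \<Sum>c\<in>{0..<l}. ft 0 b c) = zeta (r 2) (r 3)"
proof -
  have c: "(\<Sum>a\<in>{0..<l}. \<Sum>b\<in>{0..<l}. if \<forall>k. l dvd a * r i $ k + b * r j $ k then 1 else 0::int) = zeta (r i) (r j)"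
    if "i \<in> {1..4}" "j \<in> {1..4}" "i \<noteq> j" for i j
    unfolding sum2_card using count2[OF l, of "r i" "r j"] orth'[OF that] orth[of j j] that zeta_nonneg[of "r i" "r j"] by simp
  show "(\<Sum>a\<in>{0..<l}. \<Sum>b\<in>{0..<l}. ft a b 0) = zeta (r 1) (r 2)"
    using c[of 1 2] by (simp add: ft_def Pt_def)
  show "(\<Sum>a\<in>{0..<l}. \<Sum>c\<in>{0..<l}. ft a 0 c) = zeta (r 1) (r 3)"
    using c[of 1 3] by (simp add: ft_def Pt_def)
  show "(\<Sum>b\<in>{0..<l}. \<Sum>c\<in>{0..<l}. ft 0 b c) = zeta (r 2) (r 3)"
    using c[of 2 3] by (simp add: ft_def Pt_def)
qed

end


context lat
begin

lemma Hs_iff: "y \<in> Hs \<longleftrightarrow> (\<forall>k. 0 \<le> y k \<and> y k < l) \<and>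
    (\<forall>k. l dvd y 1 * r 1 $ k + y 2 * r 2 $ k + y 3 * r 3 $ k + y 4 * r 4 $ k)"
  unfolding Hs_def ibox_def by (simp add: sum_4 rho_simps)

lemma S3: "(\<Sum>a\<in>{0..<l}. \<Sum>b\<in>{0..<l}. \<Sum>c\<in>{0..<l}. ft a b c) = l * Dgcd (r 4)"
proof -
  define T where "T = (SIGMA a:{0..<l}. SIGMA b:{0..<l}. {c\<in>{0..<l}. Pt a b c})"
  have "(\<Sum>a\<in>{0..<l}. \<Sum>b\<in>{0..<l}. \<Sum>c\<in>{0..<l}. ft a b c)
      = (\<Sum>a\<in>{0..<l}. int (card (SIGMA b:{0..<l}. {c\<in>{0..<l}. Pt a b c})))"
    unfolding ft_def by (simp only: sum2_card)
  also have "\<dots> = int (\<Sum>a\<in>{0..<l}. card (SIGMA b:{0..<l}. {c\<in>{0..<l}. Pt a b c}))" by simp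
  also have "(\<Sum>a\<in>{0..<l}. card (SIGMA b:{0..<l}. {c\<in>{0..<l}. Pt a b c})) = card T"
    unfolding T_def
  proof (rule card_SigmaI[symmetric])
    show "\<forall>a\<in>{0..<l}. finite (SIGMA b:{0..<l}. {c\<in>{0..<l}. Pt a b c})"
    proof
      fix a show "finite (SIGMA b:{0..<l}. {c\<in>{0..<l}. Pt a b c})"
        by (rule finite_SigmaI) (simp, rule finite_subset[of _ "{0..<l}"], auto)
    qed
  qed simp
  also have "card T = card {y \<in> Hs. y 4 = 0}"
  proof (rule bij_betw_same_card)
    define e where "e = (\<lambda>(a::int,b::int,c::int). (\<lambda>k::4. if k = 1 then a else if k = 2 then b else if k = 3 then c else 0))"
    have e1: "e (a,b,c) 1 = a" "e (a,b,c) 2 = b" "e (a,b,c) 3 = c" "e (a,b,c) 4 = 0" for a b c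
      by (simp_all add: e_def)
    show "bij_betw e T {y \<in> Hs. y 4 = 0}"
    proof (rule bij_betw_byWitness[where f'="\<lambda>y. (y 1, y 2, y 3)"])
      show "\<forall>p\<in>T. (e p 1, e p 2, e p 3) = p" by (auto simp: e1)
      show "\<forall>y\<in>{y \<in> Hs. y 4 = 0}. e (y 1, y 2, y 3) = y"
      proof
        fix y assume "y \<in> {y \<in> Hs. y 4 = 0}"
        hence y4: "y 4 = 0" by simp
        show "e (y 1, y 2, y 3) = y"
        proof
          fix k :: 4
          show "e (y 1, y 2, y 3) k = y k" using exhaust_4[of k] y4 by (auto simp: e1)
        qed
      qed
      show "e ` T \<subseteq> {y \<in> Hs. y 4 = 0}"
      proof
        fix y assume "y \<in> e ` T"
        then obtain a b c where abc: "(a,b,c) \<in> T" "y = e (a,b,c)" by auto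
        have "0 \<le> y k \<and> y k < l" for k
          using exhaust_4[of k] abc l by (auto simp: e1 T_def)
        moreover have "l dvd y 1 * r 1 $ k + y 2 * r 2 $ k + y 3 * r 3 $ k + y 4 * r 4 $ k" for k
          using abc by (simp add: e1 T_def Pt_def)
        ultimately show "y \<in> {y \<in> Hs. y 4 = 0}" using abc by (simp add: Hs_iff e1)
      qed
      show "(\<lambda>y. (y 1, y 2, y 3)) ` {y \<in> Hs. y 4 = 0} \<subseteq> T"
      proof
        fix p assume "p \<in> (\<lambda>y. (y 1, y 2, y 3)) ` {y \<in> Hs. y 4 = 0}"
        then obtain y where y: "y \<in> Hs" "y 4 = 0" "p = (y 1, y 2, y 3)" by auto
        have b: "\<forall>k. 0 \<le> y k \<and> y k < l" using y Hs_iff by blast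
        have "\<forall>k. l dvd y 1 * r 1 $ k + y 2 * r 2 $ k + y 3 * r 3 $ k + y 4 * r 4 $ k" using y Hs_iff by blast
        hence "Pt (y 1) (y 2) (y 3)" using y by (simp add: Pt_def)
        thus "p \<in> T" using b y by (simp add: T_def)
      qed
    qed
  qed
  also have "\<dots> = nat (l * Dgcd (r 4))" by (rule card_H0)
  finally show ?thesis using l Dgcd_nonneg[of "r 4"] by simp
qed

end


lemma sum3_card:
  assumes "finite (A::int set)"
  shows "(\<Sum>a\<in>A. \<Sum>b\<in>A. \<Sum>c\<in>A. if Q a b c then 1 else 0::int)
   = int (card (SIGMA a:A. SIGMA b:A. {c\<in>A. Q a b c}))"
proof -
  have "(\<Sum>a\<in>A. \<Sum>b\<in>A. \<Sum>c\<in>A. if Q a b c then 1 else 0::int) = (\<Sum>a\<in>A. \<Sum>b\<in>A. int (card {c\<in>A. Q a b c}))"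
    using assms by (simp add: sum_ind)
  also have "\<dots> = (\<Sum>a\<in>A. int (card (SIGMA b:A. {c\<in>A. Q a b c})))"
    using assms by (simp add: card_SigmaI)
  also have "\<dots> = int (card (SIGMA a:A. SIGMA b:A. {c\<in>A. Q a b c}))"
    using assms by (simp add: card_SigmaI finite_SigmaI)
  finally show ?thesis .
qed

context lat
begin

lemma expand_vec: "l * x $ k = idot x (r 1) * r 1 $ k + idot x (r 2) * r 2 $ k + idot x (r 3) * r 3 $ k + idot x (r 4) * r 4 $ k"
proof -
  have "l * x $ k = (\<Sum>i\<in>UNIV. (\<Sum>m\<in>UNIV. x $ m * rho r i $ m) * rho r i $ k)"
    by (rule expand[symmetric])
  also have "\<dots> = (\<Sum>i\<in>UNIV. idot x (rho r i) * rho r i $ k)" by (simp add: idot_def)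
  finally show ?thesis by (simp add: sum_4 rho_simps)
qed

lemma dot_back:
  assumes "\<And>k. l * x $ k = a * r 1 $ k + b * r 2 $ k + c * r 3 $ k"
  shows "idot x (r 1) = a" "idot x (r 2) = b" "idot x (r 3) = c" "idot x (r 4) = 0"
proof -
  have g: "l * idot x (r j) = a * idot (r 1) (r j) + b * idot (r 2) (r j) + c * idot (r 3) (r j)" for j
  proof -
    have "l * idot x (r j) = (\<Sum>k\<in>UNIV. (l * x $ k) * r j $ k)"
      by (simp add: idot_def sum_distrib_left mult.assoc)
    also have "\<dots> = (\<Sum>k\<in>UNIV. (a * r 1 $ k + b * r 2 $ k + c * r 3 $ k) * r j $ k)" using assms by simp
    also have "\<dots> = a * idot (r 1) (r j) + b * idot (r 2) (r j) + c * idot (r 3) (r j)"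
      by (simp add: idot_def sum.distrib sum_distrib_left algebra_simps)
    finally show ?thesis .
  qed
  show "idot x (r 1) = a" using g[of 1] orth l by simp
  show "idot x (r 2) = b" using g[of 2] orth l by simp
  show "idot x (r 3) = c" using g[of 3] orth l by simp
  show "idot x (r 4) = 0" using g[of 4] orth l by simp
qed

lemma real_dot: "real_of_int (idot x y) = (\<Sum>k\<in>UNIV. real_of_int (x $ k) * real_of_int (y $ k))"
  by (simp add: idot_def)

lemma lattice_count_eq:
  assumes t: "t > 0"
  shows "lattice_count (cube3 r) t =
     card (SIGMA a:{0..int t*l}. SIGMA b:{0..int t*l}. {c\<in>{0..int t*l}. Pt a b c})"
proof -
  let ?T = "SIGMA a:{0..int t*l}. SIGMA b:{0..int t*l}. {c\<in>{0..int t*l}. Pt a b c}"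
  let ?X = "{x :: int ^ 4. vec_of_int4 x \<in> ((\<lambda>y. real t *\<^sub>R y) ` cube3 r)}"
  have cv: "vec_of_int4 x = real t *\<^sub>R (s1 *\<^sub>R vec_of_int4 (r 1) + s2 *\<^sub>R vec_of_int4 (r 2) + s3 *\<^sub>R vec_of_int4 (r 3))
      \<longleftrightarrow> (\<forall>k. real_of_int (x $ k) = real t * (s1 * real_of_int (r 1 $ k) + s2 * real_of_int (r 2 $ k) + s3 * real_of_int (r 3 $ k)))"
    for x and s1 s2 s3 :: real
    by (simp add: vec_eq_iff vec_of_int4_def)
  have memX: "x \<in> ?X \<longleftrightarrow> (\<exists>s1 s2 s3::real. s1 \<in> {0..1} \<and> s2 \<in> {0..1} \<and> s3 \<in> {0..1} \<and>
       (\<forall>k. real_of_int (x $ k) = real t * (s1 * real_of_int (r 1 $ k) + s2 * real_of_int (r 2 $ k) + s3 * real_of_int (r 3 $ k))))" for x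
  proof -
    have "x \<in> ?X \<longleftrightarrow> (\<exists>s1 s2 s3::real. s1 \<in> {0..1} \<and> s2 \<in> {0..1} \<and> s3 \<in> {0..1} \<and>
       vec_of_int4 x = real t *\<^sub>R (s1 *\<^sub>R vec_of_int4 (r 1) + s2 *\<^sub>R vec_of_int4 (r 2) + s3 *\<^sub>R vec_of_int4 (r 3)))"
      unfolding cube3_def by blast
    thus ?thesis unfolding cv .
  qed
  have "bij_betw (\<lambda>x. (idot x (r 1), idot x (r 2), idot x (r 3))) ?X ?T"
  proof (rule bij_betw_byWitness[where f'="\<lambda>(a,b,c). \<chi> k. (a * r 1 $ k + b * r 2 $ k + c * r 3 $ k) div l"])
    have X4: "idot x (r 4) = 0" and Xb: "0 \<le> idot x (r j) \<and> idot x (r j) \<le> int t * l"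
      if xX: "x \<in> ?X" and jj: "j \<in> {1,2,3}" for x j
    proof -
      obtain s1 s2 s3 where s: "s1 \<in> {0..1}" "s2 \<in> {0..1}" "s3 \<in> {0..1}"
        and xs: "\<And>k. real_of_int (x $ k) = real t * (s1 * real_of_int (r 1 $ k) + s2 * real_of_int (r 2 $ k) + s3 * real_of_int (r 3 $ k))"
        using xX memX by blast
      have rd: "real_of_int (idot x (r i)) = real t * (s1 * idot (r 1) (r i) + s2 * idot (r 2) (r i) + s3 * idot (r 3) (r i))" for i
        unfolding real_dot xs by (simp add: idot_def sum.distrib sum_distrib_left algebra_simps)
      show "idot x (r 4) = 0" using rd[of 4] orth by simp
      have "real_of_int (idot x (r j)) = real t * (if j = 1 then s1 else if j = 2 then s2 else s3) * l"
        using rd[of j] orth jj by auto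
      moreover have "0 \<le> real t * (if j = 1 then s1 else if j = 2 then s2 else s3) * l" using s l by auto
      moreover have "real t * (if j = 1 then s1 else if j = 2 then s2 else s3) * l \<le> real t * 1 * l"
        using s l by (intro mult_right_mono mult_left_mono) auto
      ultimately have "0 \<le> real_of_int (idot x (r j)) \<and> real_of_int (idot x (r j)) \<le> real_of_int (int t * l)" by simp
      thus "0 \<le> idot x (r j) \<and> idot x (r j) \<le> int t * l" by linarith
    qed
    show "\<forall>x\<in>?X. (\<lambda>(a,b,c). \<chi> k. (a * r 1 $ k + b * r 2 $ k + c * r 3 $ k) div l) (idot x (r 1), idot x (r 2), idot x (r 3)) = x"
    proof
      fix x assume x: "x \<in> ?X"
      have "(idot x (r 1) * r 1 $ k + idot x (r 2) * r 2 $ k + idot x (r 3) * r 3 $ k) div l = x $ k" for k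
      proof -
        have "idot x (r 1) * r 1 $ k + idot x (r 2) * r 2 $ k + idot x (r 3) * r 3 $ k = l * x $ k"
          using expand_vec[of x k] X4[OF x, of 1] by simp
        thus ?thesis using l by simp
      qed
      thus "(\<lambda>(a,b,c). \<chi> k. (a * r 1 $ k + b * r 2 $ k + c * r 3 $ k) div l) (idot x (r 1), idot x (r 2), idot x (r 3)) = x"
        by (simp add: vec_eq_iff)
    qed
    show "(\<lambda>x. (idot x (r 1), idot x (r 2), idot x (r 3))) ` ?X \<subseteq> ?T"
    proof
      fix p assume "p \<in> (\<lambda>x. (idot x (r 1), idot x (r 2), idot x (r 3))) ` ?X"
      then obtain x where x: "x \<in> ?X" "p = (idot x (r 1), idot x (r 2), idot x (r 3))" by blast
      have "Pt (idot x (r 1)) (idot x (r 2)) (idot x (r 3))"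
        unfolding Pt_def
      proof
        fix k
        have "l * x $ k = idot x (r 1) * r 1 $ k + idot x (r 2) * r 2 $ k + idot x (r 3) * r 3 $ k"
          using expand_vec[of x k] X4[OF x(1), of 1] by simp
        thus "l dvd idot x (r 1) * r 1 $ k + idot x (r 2) * r 2 $ k + idot x (r 3) * r 3 $ k"
          by (metis dvd_triv_left)
      qed
      thus "p \<in> ?T" using Xb[OF x(1), of 1] Xb[OF x(1), of 2] Xb[OF x(1), of 3] x(2) by simp
    qed
    show "\<forall>p\<in>?T. (\<lambda>x. (idot x (r 1), idot x (r 2), idot x (r 3))) ((\<lambda>(a,b,c). \<chi> k. (a * r 1 $ k + b * r 2 $ k + c * r 3 $ k) div l) p) = p"
      and "(\<lambda>(a,b,c). \<chi> k. (a * r 1 $ k + b * r 2 $ k + c * r 3 $ k) div l) ` ?T \<subseteq> ?X"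
    proof -
      have main: "let x = (\<chi> k. (a * r 1 $ k + b * r 2 $ k + c * r 3 $ k) div l) in
          (idot x (r 1), idot x (r 2), idot x (r 3)) = (a,b,c) \<and> x \<in> ?X"
        if p: "(a,b,c) \<in> ?T" for a b c
      proof -
        define x where "x = (\<chi> k. (a * r 1 $ k + b * r 2 $ k + c * r 3 $ k) div l)"
        have P: "Pt a b c" and ab: "0 \<le> a" "a \<le> int t * l" "0 \<le> b" "b \<le> int t * l" "0 \<le> c" "c \<le> int t * l"
          using p by auto
        have lx: "l * x $ k = a * r 1 $ k + b * r 2 $ k + c * r 3 $ k" for k
          using P unfolding Pt_def x_def by simp
        note db = dot_back[OF lx]
        have tl: "real t * l > 0" using t l by simp
        define s1 where "s1 = real_of_int a / (real t * l)"
        define s2 where "s2 = real_of_int b / (real t * l)"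
        define s3 where "s3 = real_of_int c / (real t * l)"
        have rr: "real_of_int (int t * l) = real t * real_of_int l" by simp
        have ra: "real_of_int a \<le> real t * real_of_int l" "real_of_int b \<le> real t * real_of_int l"
                 "real_of_int c \<le> real t * real_of_int l"
          using ab(2,4,6) rr by (metis of_int_le_iff)+
        have sr: "s1 \<in> {0..1}" "s2 \<in> {0..1}" "s3 \<in> {0..1}"
          using ab ra tl by (auto simp: s1_def s2_def s3_def divide_le_eq_1)
        have "real_of_int (x $ k) = real t * (s1 * real_of_int (r 1 $ k) + s2 * real_of_int (r 2 $ k) + s3 * real_of_int (r 3 $ k))" for k
        proof -
          have h: "real_of_int l * real_of_int (x $ k) = real_of_int (a * r 1 $ k + b * r 2 $ k + c * r 3 $ k)"
            using lx[of k] by (metis of_int_mult)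
          have "real t * (s1 * real_of_int (r 1 $ k) + s2 * real_of_int (r 2 $ k) + s3 * real_of_int (r 3 $ k))
              = real_of_int (a * r 1 $ k + b * r 2 $ k + c * r 3 $ k) / real_of_int l"
            using tl l t by (simp add: s1_def s2_def s3_def field_simps)
          also have "\<dots> = real_of_int (x $ k)" unfolding h[symmetric] using l by simp
          finally show ?thesis by simp
        qed
        hence "x \<in> ?X" unfolding memX using sr by blast
        thus ?thesis unfolding Let_def x_def[symmetric] using db by simp
      qed
      show "\<forall>p\<in>?T. (\<lambda>x. (idot x (r 1), idot x (r 2), idot x (r 3))) ((\<lambda>(a,b,c). \<chi> k. (a * r 1 $ k + b * r 2 $ k + c * r 3 $ k) div l) p) = p"
        using main by (auto simp: Let_def)
      show "(\<lambda>(a,b,c). \<chi> k. (a * r 1 $ k + b * r 2 $ k + c * r 3 $ k) div l) ` ?T \<subseteq> ?X"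
        using main by (auto simp: Let_def)
    qed
  qed
  hence "card ?X = card ?T" by (rule bij_betw_same_card)
  thus ?thesis by (simp add: lattice_count_def)
qed

end


theorem theorem2p15:
  fixes l :: int and r :: "nat \<Rightarrow> int ^ 4" and t :: nat
  assumes "l > 0"
    and "\<And>i j. i \<in> {1..4} \<Longrightarrow> j \<in> {1..4} \<Longrightarrow>
           idot (r i) (r j) = (if i = j then l else 0)"
    and "t > 0"
  shows "int (lattice_count (cube3 r) t) =
           l * Dgcd (r 4) * int t ^ 3
         + (zeta (r 1) (r 2) + zeta (r 1) (r 3) + zeta (r 2) (r 3)) * int t ^ 2
         + (Dgcd (r 1) + Dgcd (r 2) + Dgcd (r 3)) * int t + 1"
proof -
  interpret lat l r using assms(1,2) by unfold_locales auto
  have "int (lattice_count (cube3 r) t) =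
      int (card (SIGMA a:{0..int t*l}. SIGMA b:{0..int t*l}. {c\<in>{0..int t*l}. Pt a b c}))"
    using lattice_count_eq[OF assms(3)] by simp
  also have "\<dots> = (\<Sum>a\<in>{0..int t*l}. \<Sum>b\<in>{0..int t*l}. \<Sum>c\<in>{0..int t*l}. ft a b c)"
    unfolding ft_def by (rule sum3_card[symmetric]) simp
  finally have e0: "int (lattice_count (cube3 r) t) = (\<Sum>a\<in>{0..int t*l}. \<Sum>b\<in>{0..int t*l}. \<Sum>c\<in>{0..int t*l}. ft a b c)" .
  have f0: "ft 0 0 0 = 1" by (simp add: ft_def Pt_def)
  show ?thesis by (simp only: e0 total_expand f0 S1 S2 S3) (simp add: algebra_simps)
qed


end
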